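(* For every $n\ge 1$: (1) $|C^*_{n+1}| = \sum_{k=0}^{n-1} [b^k a^{n-1-k}]$; (2) $|C^*_{n+1}| \le \alpha_n \le |C^*_{n+1}| + |C^*_{n+2}| \le 2|C^*_{n+2}|$.
   Context: For $\pi \in S_m$, a pair $1\le i<j\le m$ is a stretching pair if $\pi(i) < i < j < \pi(j)$; $C^*_m$ is the set of $m$-cycles (permutations of $[m]$ consisting of one cycle of length $m$) with no stretching pairs. For non-negative integers $p+q=n-1$, $[b^p a^q]$ is the number of $\pi \in S_n$ such that, for $i\in[n-1]$, $\pi(i)>i$ iff $i \in\{1,\dots,p\}$. $\alpha_n$ is the number of $\pi \in S_n$ for which there are no indices $1\le i<i+1<j<j+1\le n$ with $\pi(i+1)<\pi(i)<\pi(j)<\pi(j+1)$ (pattern $21\text{-}34$) and no such indices with $\pi(j+1)<\pi(j)<\pi(i)<\pi(i+1)$ (pattern $34\text{-}21$). *)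

theory Defs
  imports "HOL-Combinatorics.Permutations"
begin

definition Sym :: "nat \<Rightarrow> (nat \<Rightarrow> nat) set" where
  "Sym m = {p. p permutes {1..m}}"

definition is_full_cycle :: "nat \<Rightarrow> (nat \<Rightarrow> nat) \<Rightarrow> bool" where
  "is_full_cycle m p \<longleftrightarrow> (\<forall>i\<in>{1..m}. \<forall>j\<in>{1..m}. \<exists>k. (p ^^ k) i = j)"

definition stretching_pair :: "(nat \<Rightarrow> nat) \<Rightarrow> nat \<Rightarrow> nat \<Rightarrow> bool" where
  "stretching_pair p i j \<longleftrightarrow> p i < i \<and> i < j \<and> j < p j"

definition Cstar :: "nat \<Rightarrow> (nat \<Rightarrow> nat) set" where
  "Cstar m = {p \<in> Sym m. is_full_cycle m p \<and>
      \<not> (\<exists>i j. 1 \<le> i \<and> i < j \<and> j \<le> m \<and> stretching_pair p i j)}"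

text \<open>[b^p a^q] with p + q = n - 1: number of permutations of [n] whose excedances
  among positions 1..n-1 are exactly the positions 1..p.\<close>
definition ba_count :: "nat \<Rightarrow> nat \<Rightarrow> nat" where
  "ba_count p q = card {\<pi> \<in> Sym (p + q + 1).
      \<forall>i\<in>{1..p + q}. (\<pi> i > i \<longleftrightarrow> i \<le> p)}"

definition alpha :: "nat \<Rightarrow> nat" where
  "alpha n = card {\<pi> \<in> Sym n.
      \<not> (\<exists>i j. 1 \<le> i \<and> i + 1 < j \<and> j + 1 \<le> n \<and>
             \<pi> (i+1) < \<pi> i \<and> \<pi> i < \<pi> j \<and> \<pi> j < \<pi> (j+1)) \<and>
      \<not> (\<exists>i j. 1 \<le> i \<and> i + 1 < j \<and> j + 1 \<le> n \<and>
             \<pi> (j+1) < \<pi> j \<and> \<pi> j < \<pi> i \<and> \<pi> i < \<pi> (i+1))}"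

end

theory Submission
  imports Defs "HOL-Combinatorics.Cycles"
begin

lemma cyc_funpow_nth:
  assumes "distinct L" "i < length L"
  shows "(cycle_of_list L ^^ k) (L!i) = L!((i + k) mod length L)"
proof -
  have "map (cycle_of_list L ^^ k) L = rotate k L" using cyclic_rotation[OF assms(1)] .
  hence "(cycle_of_list L ^^ k) (L!i) = rotate k L ! i" using assms(2) by (metis nth_map)
  also have "\<dots> = L!((k + i) mod length L)" using nth_rotate[OF assms(2)] .
  finally show ?thesis by (simp add: add.commute)
qed

lemma cyc_nth:
  assumes "distinct L" "i < length L"
  shows "cycle_of_list L (L!i) = L!(Suc i mod length L)"
  using cyc_funpow_nth[OF assms, of "Suc 0"] by simp
lemma cyc_in_set: "x \<in> set L \<Longrightarrow> (cycle_of_list L ^^ k) x \<in> set L"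
  by (metis permutes_in_image permutes_funpow cycle_permutes)

lemma least_power_cyc:
  assumes "distinct L" "L \<noteq> []"
  shows "least_power (cycle_of_list L) (hd L) = length L"
proof -
  have h: "hd L = L!0" using assms(2) by (simp add: hd_conv_nth)
  have l0: "0 < length L" using assms(2) by simp
  show ?thesis unfolding least_power_def
  proof (rule Least_equality)
    show "(cycle_of_list L ^^ length L) (hd L) = hd L \<and> 0 < length L"
      using cyc_funpow_nth[OF assms(1) l0, of "length L"] h l0 by simp
  next
    fix y assume y: "(cycle_of_list L ^^ y) (hd L) = hd L \<and> 0 < y"
    hence "L ! (y mod length L) = L ! 0" using cyc_funpow_nth[OF assms(1) l0, of y] h by simp
    hence "y mod length L = 0" using assms(1) l0 by (simp add: nth_eq_iff_index_eq)
    thus "length L \<le> y" using y by (metis dvd_imp_le mod_0_imp_dvd)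
  qed
qed

lemma support_cyc:
  assumes "distinct L" "L \<noteq> []"
  shows "support (cycle_of_list L) (hd L) = L"
proof -
  have h: "hd L = L!0" using assms(2) by (simp add: hd_conv_nth)
  have l0: "0 < length L" using assms(2) by simp
  have "map (\<lambda>i. (cycle_of_list L ^^ i) (hd L)) [0..<length L] = map (\<lambda>i. L!i) [0..<length L]"
    using cyc_funpow_nth[OF assms(1) l0] h by auto
  thus ?thesis using least_power_cyc[OF assms] map_nth[of L] by simp
qed

lemma agree_funpow:
  assumes "\<forall>x\<in>set L. t x = cycle_of_list L x" "x \<in> set L"
  shows "(t ^^ i) x = (cycle_of_list L ^^ i) x"
proof (induction i)
  case (Suc i)
  then show ?case using assms cyc_in_set[OF assms(2), of i] by simp
qed simp

lemma support_agree:
  assumes "distinct L" "L \<noteq> []" "\<forall>x\<in>set L. t x = cycle_of_list L x"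
  shows "support t (hd L) = L"
proof -
  have hs: "hd L \<in> set L" using assms(2) by simp
  have "least_power t (hd L) = least_power (cycle_of_list L) (hd L)"
    unfolding least_power_def using agree_funpow[OF assms(3) hs] by simp
  thus ?thesis using support_cyc[OF assms(1,2)] agree_funpow[OF assms(3) hs] by simp
qed




definition edges :: "nat list \<Rightarrow> (nat \<times> nat) set" where
  "edges L = set (zip L (rotate1 L))"

definition sf :: "nat list \<Rightarrow> bool" where
  "sf L \<longleftrightarrow> \<not> (\<exists>(x,x')\<in>edges L. \<exists>(y,y')\<in>edges L. x' < x \<and> x < y \<and> y < y')"

definition DL :: "nat \<Rightarrow> nat \<Rightarrow> nat list set" where
  "DL m a = {L. distinct L \<and> set L = {1..m} \<and> L \<noteq> [] \<and> hd L = a \<and> sf L}"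

lemma zip_map_self: "zip xs (map f xs) = map (\<lambda>x. (x, f x)) xs"
  by (induct xs) auto

lemma edges_cyc:
  assumes "distinct L"
  shows "edges L = (\<lambda>x. (x, cycle_of_list L x)) ` set L"
proof -
  have "rotate1 L = map (cycle_of_list L) L"
    using cyclic_rotation[OF assms, of "Suc 0"] by simp
  thus ?thesis unfolding edges_def by (simp add: zip_map_self)
qed

lemma stretch_iff:
  assumes "distinct L" "set L = {1..m}"
  shows "(\<exists>i j. 1 \<le> i \<and> i < j \<and> j \<le> m \<and> stretching_pair (cycle_of_list L) i j) \<longleftrightarrow> \<not> sf L"
proof
  assume "\<exists>i j. 1 \<le> i \<and> i < j \<and> j \<le> m \<and> stretching_pair (cycle_of_list L) i j"
  then obtain i j where ij: "1 \<le> i" "i < j" "j \<le> m" "stretching_pair (cycle_of_list L) i j" by blast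
  have "i \<in> set L" "j \<in> set L" using ij assms(2) by auto
  hence "(i, cycle_of_list L i) \<in> edges L" "(j, cycle_of_list L j) \<in> edges L"
    using edges_cyc[OF assms(1)] by auto
  thus "\<not> sf L" using ij(4) unfolding sf_def stretching_pair_def by blast
next
  assume "\<not> sf L"
  then obtain x x' y y' where e: "(x,x') \<in> edges L" "(y,y') \<in> edges L" "x' < x" "x < y" "y < y'"
    unfolding sf_def by blast
  have "x \<in> set L" "x' = cycle_of_list L x" "y \<in> set L" "y' = cycle_of_list L y"
    using e(1,2) edges_cyc[OF assms(1)] by auto
  thus "\<exists>i j. 1 \<le> i \<and> i < j \<and> j \<le> m \<and> stretching_pair (cycle_of_list L) i j"
    using e assms(2) unfolding stretching_pair_def by (intro exI[of _ x] exI[of _ y]) auto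
qed

lemma full_cycle_support:
  assumes "\<sigma> \<in> Sym m" "is_full_cycle m \<sigma>" "a \<in> {1..m}"
  shows "distinct (support \<sigma> a) \<and> set (support \<sigma> a) = {1..m} \<and> support \<sigma> a \<noteq> [] \<and>
         hd (support \<sigma> a) = a \<and> cycle_of_list (support \<sigma> a) = \<sigma>"
proof -
  have pm: "\<sigma> permutes {1..m}" using assms(1) unfolding Sym_def by simp
  have perm: "permutation \<sigma>" using pm permutation_permutes by blast
  have d: "distinct (support \<sigma> a)" using cycle_of_permutation[OF perm] .
  have s: "set (support \<sigma> a) = {1..m}"
  proof -
    have "range (\<lambda>i. (\<sigma> ^^ i) a) \<subseteq> {1..m}"
      using permutes_in_image[OF permutes_funpow[OF pm]] assms(3) by auto
    moreover have "{1..m} \<subseteq> range (\<lambda>i. (\<sigma> ^^ i) a)"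
    proof
      fix j assume "j \<in> {1..m}"
      then obtain k where "(\<sigma> ^^ k) a = j" using assms(2,3) unfolding is_full_cycle_def by blast
      thus "j \<in> range (\<lambda>i. (\<sigma> ^^ i) a)" by (metis rangeI)
    qed
    ultimately show ?thesis using support_set[OF perm] by blast
  qed
  have lp: "least_power \<sigma> a > 0" using least_power_of_permutation(2)[OF perm] .
  have ne: "support \<sigma> a \<noteq> []" using lp by simp
  have h: "hd (support \<sigma> a) = a" using lp by (simp add: hd_map)
  have c: "cycle_of_list (support \<sigma> a) = \<sigma>"
  proof
    fix b show "cycle_of_list (support \<sigma> a) b = \<sigma> b"
    proof (cases "b \<in> set (support \<sigma> a)")
      case True thus ?thesis using cycle_restrict[OF perm True] by simp
    next
      case False
      hence "b \<notin> {1..m}" using s by simp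
      thus ?thesis using id_outside_supp[OF False] permutes_not_in[OF pm] by simp
    qed
  qed
  show ?thesis using d s ne h c by blast
qed

lemma cyc_full:
  assumes "distinct L" "set L = {1..m}"
  shows "cycle_of_list L \<in> Sym m \<and> is_full_cycle m (cycle_of_list L)"
proof
  show "cycle_of_list L \<in> Sym m" using cycle_permutes[of L] assms(2) unfolding Sym_def by simp
  show "is_full_cycle m (cycle_of_list L)" unfolding is_full_cycle_def
  proof (intro ballI)
    fix i j assume "i \<in> {1..m}" "j \<in> {1..m}"
    then obtain p q where pq: "p < length L" "L!p = i" "q < length L" "L!q = j"
      using assms(2) by (metis in_set_conv_nth)
    have "(cycle_of_list L ^^ (q + length L - p)) (L!p) = L!((p + (q + length L - p)) mod length L)"
      using cyc_funpow_nth[OF assms(1) pq(1)] .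
    also have "(p + (q + length L - p)) mod length L = q" using pq by simp
    finally show "\<exists>k. (cycle_of_list L ^^ k) i = j" using pq by metis
  qed
qed

lemma card_Cstar_DL:
  assumes "a \<in> {1..m}"
  shows "card (Cstar m) = card (DL m a)"
proof (rule bij_betw_same_card)
  show "bij_betw (\<lambda>\<sigma>. support \<sigma> a) (Cstar m) (DL m a)"
  proof (rule bij_betw_byWitness[where f'=cycle_of_list])
    show "\<forall>\<sigma>\<in>Cstar m. cycle_of_list (support \<sigma> a) = \<sigma>"
      using full_cycle_support assms unfolding Cstar_def by blast
    show "\<forall>L\<in>DL m a. support (cycle_of_list L) a = L"
      using support_cyc unfolding DL_def by blast
    show "(\<lambda>\<sigma>. support \<sigma> a) ` Cstar m \<subseteq> DL m a"
    proof
      fix L assume "L \<in> (\<lambda>\<sigma>. support \<sigma> a) ` Cstar m"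
      then obtain \<sigma> where s: "\<sigma> \<in> Cstar m" "L = support \<sigma> a" by blast
      have k: "distinct L \<and> set L = {1..m} \<and> L \<noteq> [] \<and> hd L = a \<and> cycle_of_list L = \<sigma>"
        using full_cycle_support[of \<sigma> m a] s assms unfolding Cstar_def by auto
      hence "sf L" using stretch_iff[of L m] s(1) unfolding Cstar_def by auto
      thus "L \<in> DL m a" using k unfolding DL_def by blast
    qed
    show "cycle_of_list ` DL m a \<subseteq> Cstar m"
    proof
      fix \<sigma> assume "\<sigma> \<in> cycle_of_list ` DL m a"
      then obtain L where L: "L \<in> DL m a" "\<sigma> = cycle_of_list L" by blast
      have "distinct L" "set L = {1..m}" "sf L" using L(1) unfolding DL_def by auto
      thus "\<sigma> \<in> Cstar m" using cyc_full stretch_iff L(2) unfolding Cstar_def by blast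
    qed
  qed
qed




definition cp :: "nat list \<Rightarrow> (nat \<times> nat) set" where
  "cp xs = set (zip xs (tl xs))"

definition pf :: "nat list \<Rightarrow> bool" where
  "pf w \<longleftrightarrow> \<not> (\<exists>(x,x')\<in>cp w. \<exists>(y,y')\<in>cp w. x' < x \<and> x < y \<and> y < y')"

definition word :: "nat \<Rightarrow> nat list \<Rightarrow> bool" where
  "word n w \<longleftrightarrow> distinct w \<and> set w = {1..n}"

lemma cp_Nil[simp]: "cp [] = {}" and cp_single[simp]: "cp [x] = {}"
  by (simp_all add: cp_def)

lemma cp_Cons2[simp]: "cp (x # y # r) = insert (x, y) (cp (y # r))"
  by (simp add: cp_def)

lemma cp_Cons: "cp (a # xs) = (if xs = [] then {} else insert (a, hd xs) (cp xs))"
  by (cases xs) auto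

lemma cp_map: "cp (map f xs) = (\<lambda>(x,y). (f x, f y)) ` cp xs"
proof (induction xs rule: induct_list012)
  case (3 x y zs) thus ?case by simp
qed simp_all

lemma cp_snoc: "xs \<noteq> [] \<Longrightarrow> cp (xs @ [b]) = insert (last xs, b) (cp xs)"
proof (induction xs rule: induct_list012)
  case (3 x y zs) thus ?case by auto
qed auto

lemma cp_set: "(x, y) \<in> cp xs \<Longrightarrow> x \<in> set xs \<and> y \<in> set xs"
proof (induction xs rule: induct_list012)
  case (3 x y zs) thus ?case by auto
qed auto

lemma edges_Cons_aux: "xs \<noteq> [] \<Longrightarrow>
   set (zip (a # xs) (xs @ [b])) = insert (a, hd xs) (insert (last xs, b) (cp xs))"
proof (induction xs arbitrary: a)
  case (Cons x xs)
  show ?case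
  proof (cases "xs = []")
    case True thus ?thesis by simp
  next
    case False
    have "set (zip (a # x # xs) ((x # xs) @ [b])) = insert (a, x) (set (zip (x # xs) (xs @ [b])))"
      by simp
    also have "\<dots> = insert (a, x) (insert (x, hd xs) (insert (last xs, b) (cp xs)))"
      using Cons.IH[OF False] by simp
    finally show ?thesis using False by (auto simp: cp_Cons)
  qed
qed simp

lemma edges_Cons: "xs \<noteq> [] \<Longrightarrow> edges (a # xs) = insert (a, hd xs) (insert (last xs, a) (cp xs))"
  unfolding edges_def using edges_Cons_aux by simp

lemma finite_words: "finite {w. word n w \<and> P w}"
proof (rule finite_subset)
  show "{w. word n w \<and> P w} \<subseteq> {xs. set xs \<subseteq> {1..n} \<and> length xs = n}"
    unfolding word_def using distinct_card by fastforce
  show "finite {xs. set xs \<subseteq> {1..n} \<and> length xs = n}" by (rule finite_lists_length_eq) simp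
qed

lemma word_length: "word n w \<Longrightarrow> length w = n"
  unfolding word_def using distinct_card by fastforce

lemma word_ne: "word n w \<Longrightarrow> n \<ge> 1 \<Longrightarrow> w \<noteq> []"
  unfolding word_def by auto

lemma cp_bound: "word n w \<Longrightarrow> (x, y) \<in> cp w \<Longrightarrow> 1 \<le> x \<and> x \<le> n \<and> 1 \<le> y \<and> y \<le> n"
  using cp_set unfolding word_def by fastforce

lemma last_bound: "word n w \<Longrightarrow> w \<noteq> [] \<Longrightarrow> 1 \<le> last w \<and> last w \<le> n"
  unfolding word_def using last_in_set by fastforce

lemma hd_bound: "word n w \<Longrightarrow> w \<noteq> [] \<Longrightarrow> 1 \<le> hd w \<and> hd w \<le> n"
  unfolding word_def using hd_in_set by fastforce

lemma not_sfE:
  assumes "\<not> sf L"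
  obtains x x' y y' where "(x,x') \<in> edges L" "(y,y') \<in> edges L" "x' < x" "x < y" "y < y'"
  using assms unfolding sf_def by blast

lemma not_pfE:
  assumes "\<not> pf L"
  obtains x x' y y' where "(x,x') \<in> cp L" "(y,y') \<in> cp L" "x' < x" "x < y" "y < y'"
  using assms unfolding pf_def by blast

lemma sf_Phi:
  assumes "word n w" "n \<ge> 1"
  shows "sf ((n+1) # w) \<longleftrightarrow> pf w \<and> \<not> (\<exists>(a,a')\<in>cp w. a' < a \<and> a < last w)"
proof -
  have ne: "w \<noteq> []" using word_ne assms by blast
  have e: "edges ((n+1) # w) = insert (n+1, hd w) (insert (last w, n+1) (cp w))"
    using edges_Cons[OF ne] by simp
  have b: "\<And>x y. (x,y) \<in> cp w \<Longrightarrow> 1 \<le> x \<and> x \<le> n \<and> 1 \<le> y \<and> y \<le> n"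
    using cp_bound[OF assms(1)] by blast
  have l: "1 \<le> last w \<and> last w \<le> n" "1 \<le> hd w \<and> hd w \<le> n"
    using last_bound[OF assms(1) ne] hd_bound[OF assms(1) ne] by auto
  show ?thesis
  proof
    assume s: "sf ((n+1) # w)"
    have "pf w"
    proof (rule ccontr)
      assume "\<not> pf w"
      then obtain x x' y y' where "(x,x') \<in> cp w" "(y,y') \<in> cp w" "x' < x" "x < y" "y < y'"
        by (rule not_pfE)
      thus False using s unfolding sf_def e by blast
    qed
    moreover have "\<not> (\<exists>(a,a')\<in>cp w. a' < a \<and> a < last w)"
    proof
      assume "\<exists>(a,a')\<in>cp w. a' < a \<and> a < last w"
      then obtain a a' where "(a,a') \<in> cp w" "a' < a" "a < last w" by blast
      moreover have "last w < n + 1" using l by simp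
      ultimately show False using s unfolding sf_def e by blast
    qed
    ultimately show "pf w \<and> \<not> (\<exists>(a,a')\<in>cp w. a' < a \<and> a < last w)" by blast
  next
    assume h: "pf w \<and> \<not> (\<exists>(a,a')\<in>cp w. a' < a \<and> a < last w)"
    show "sf ((n+1) # w)"
    proof (rule ccontr)
      assume "\<not> sf ((n+1) # w)"
      then obtain x x' y y' where xy: "(x,x') \<in> edges ((n+1) # w)" "(y,y') \<in> edges ((n+1) # w)"
        "x' < x" "x < y" "y < y'" by (rule not_sfE)
      have yb: "y \<le> n + 1" using xy(2) b l unfolding e by (auto dest: b)
      have xc: "(x,x') \<in> cp w" using xy(1,3,4) yb l unfolding e by (auto dest: b)
      show False
      proof -
        consider "(y,y') = (n+1, hd w)" | "(y,y') = (last w, n+1)" | "(y,y') \<in> cp w"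
          using xy(2) unfolding e by blast
        thus False
        proof cases
          case 1 thus ?thesis using xy(5) l by simp
        next
          case 2 thus ?thesis using h xc xy(3,4) by auto
        next
          case 3 thus ?thesis using h xc xy(3,4,5) unfolding pf_def by blast
        qed
      qed
    qed
  qed
qed

lemma sf_Psi:
  assumes "word n w" "n \<ge> 1" "pf w" "\<not> (\<exists>(b,b')\<in>cp w. b < b' \<and> last w < b)"
  shows "sf ((n+2) # (map Suc w @ [1]))"
proof (rule ccontr)
  have ne: "w \<noteq> []" using word_ne assms by blast
  have ne2: "map Suc w @ [1] \<noteq> []" by simp
  have e: "edges ((n+2) # (map Suc w @ [1])) =
      insert (n+2, Suc (hd w)) (insert (1, n+2) (insert (Suc (last w), 1) ((\<lambda>(x,y). (Suc x, Suc y)) ` cp w)))"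
    using edges_Cons[OF ne2, of "n+2"] ne by (simp add: cp_snoc cp_map hd_map last_map)
  have b: "\<And>x y. (x,y) \<in> cp w \<Longrightarrow> 1 \<le> x \<and> x \<le> n \<and> 1 \<le> y \<and> y \<le> n"
    using cp_bound[OF assms(1)] by blast
  have l: "1 \<le> last w \<and> last w \<le> n" "1 \<le> hd w \<and> hd w \<le> n"
    using last_bound[OF assms(1) ne] hd_bound[OF assms(1) ne] by auto
  assume "\<not> sf ((n+2) # (map Suc w @ [1]))"
  then obtain x x' y y' where xy: "(x,x') \<in> edges ((n+2) # (map Suc w @ [1]))"
     "(y,y') \<in> edges ((n+2) # (map Suc w @ [1]))"
        "x' < x" "x < y" "y < y'" by (rule not_sfE)
  have yb: "y \<le> n + 2" using xy(2) b l unfolding e by (auto dest: b)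
  have xb: "x \<ge> 1" using xy(1) l unfolding e by (auto dest: b)
  have yc: "\<exists>b b'. (b,b') \<in> cp w \<and> y = Suc b \<and> y' = Suc b'" using xy(2,4,5) xb l unfolding e by (auto dest: b)
  then obtain b b' where bb: "(b,b') \<in> cp w" "y = Suc b" "y' = Suc b'" by blast
  consider "x = Suc (last w)" | "\<exists>a a'. (a,a') \<in> cp w \<and> x = Suc a \<and> x' = Suc a'"
    using xy(1,3,4) yb l unfolding e by (auto dest: b)
  thus False
  proof cases
    case 1 thus ?thesis using assms(4) bb xy(4,5) by auto
  next
    case 2
    then obtain a a' where "(a,a') \<in> cp w" "x = Suc a" "x' = Suc a'" by blast
    thus ?thesis using assms(3) bb xy(3,4,5) unfolding pf_def by auto
  qed
qed

lemma sf_Psi':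
  assumes "word n w" "n \<ge> 1" "sf ((n+1) # w)"
  shows "sf ((n+2) # 1 # map Suc w)"
proof (rule ccontr)
  have ne: "w \<noteq> []" using word_ne assms by blast
  have ne2: "1 # map Suc w \<noteq> []" by simp
  have e: "edges ((n+2) # 1 # map Suc w) =
      insert (n+2, 1) (insert (Suc (last w), n+2) (insert (1, Suc (hd w)) ((\<lambda>(x,y). (Suc x, Suc y)) ` cp w)))"
    using edges_Cons[OF ne2, of "n+2"] ne by (simp add: cp_Cons cp_map hd_map last_map)
  have b: "\<And>x y. (x,y) \<in> cp w \<Longrightarrow> 1 \<le> x \<and> x \<le> n \<and> 1 \<le> y \<and> y \<le> n"
    using cp_bound[OF assms(1)] by blast
  have l: "1 \<le> last w \<and> last w \<le> n" "1 \<le> hd w \<and> hd w \<le> n"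
    using last_bound[OF assms(1) ne] hd_bound[OF assms(1) ne] by auto
  have h: "pf w \<and> \<not> (\<exists>(a,a')\<in>cp w. a' < a \<and> a < last w)" using sf_Phi[OF assms(1,2)] assms(3) by blast
  assume "\<not> sf ((n+2) # 1 # map Suc w)"
  then obtain x x' y y' where xy: "(x,x') \<in> edges ((n+2) # 1 # map Suc w)"
     "(y,y') \<in> edges ((n+2) # 1 # map Suc w)"
        "x' < x" "x < y" "y < y'" by (rule not_sfE)
  have yb: "y \<le> n + 2" using xy(2) b l unfolding e by (auto dest: b)
  have xc: "\<exists>a a'. (a,a') \<in> cp w \<and> x = Suc a \<and> x' = Suc a'" using xy(1,3,4) yb l b unfolding e by (auto dest: b)
  then obtain a a' where aa: "(a,a') \<in> cp w" "x = Suc a" "x' = Suc a'" by blast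
  consider "y = Suc (last w)" | "\<exists>b b'. (b,b') \<in> cp w \<and> y = Suc b \<and> y' = Suc b'"
    using xy(2,4,5) aa l unfolding e by (auto dest: b)
  thus False
  proof cases
    case 1 thus ?thesis using h aa xy(3,4) by auto
  next
    case 2
    then obtain b b' where "(b,b') \<in> cp w" "y = Suc b" "y' = Suc b'" by blast
    thus ?thesis using h aa xy(3,4,5) unfolding pf_def by auto
  qed
qed




lemma cp_upt: "cp [a..<b] = {(i, Suc i) | i. a \<le> i \<and> Suc i < b}"
proof -
  have "cp [a..<b] = set (zip [a..<b] [Suc a..<b])" unfolding cp_def by (simp add: tl_upt del: upt_Suc)
  also have "\<dots> = {(i, Suc i) | i. a \<le> i \<and> Suc i < b}"
  proof
    show "set (zip [a..<b] [Suc a..<b]) \<subseteq> {(i, Suc i) | i. a \<le> i \<and> Suc i < b}"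
      by (auto simp: set_zip simp del: upt_Suc)
    show "{(i, Suc i) | i. a \<le> i \<and> Suc i < b} \<subseteq> set (zip [a..<b] [Suc a..<b])"
    proof
      fix p assume "p \<in> {(i, Suc i) | i. a \<le> i \<and> Suc i < b}"
      then obtain i where i: "p = (i, Suc i)" "a \<le> i" "Suc i < b" by blast
      have "([a..<b] ! (i - a), [Suc a..<b] ! (i - a)) = (i, Suc i)" "i - a < min (length [a..<b]) (length [Suc a..<b])"
        using i by (simp_all del: upt_Suc)
      thus "p \<in> set (zip [a..<b] [Suc a..<b])" unfolding set_zip using i(1) by (metis (mono_tags, lifting) mem_Collect_eq)
    qed
  qed
  finally show ?thesis .
qed

lemma cp_perm: "cp (map \<pi> [1..<n+1]) = {(\<pi> i, \<pi> (Suc i)) | i. 1 \<le> i \<and> i < n}"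
  unfolding cp_map cp_upt by (auto simp del: upt_Suc)

lemma pattern_iff:
  "(\<not> (\<exists>i j. 1 \<le> i \<and> i + 1 < j \<and> j + 1 \<le> n \<and>
             \<pi> (i+1) < \<pi> i \<and> \<pi> i < \<pi> j \<and> \<pi> j < \<pi> (j+1)) \<and>
    \<not> (\<exists>i j. 1 \<le> i \<and> i + 1 < j \<and> j + 1 \<le> n \<and>
             \<pi> (j+1) < \<pi> j \<and> \<pi> j < \<pi> i \<and> \<pi> i < \<pi> (i+1)))
   \<longleftrightarrow> pf (map \<pi> [1..<n+1])"
proof -
  have e: "pf (map \<pi> [1..<n+1]) \<longleftrightarrow> \<not> (\<exists>i j. 1 \<le> i \<and> i < n \<and> 1 \<le> j \<and> j < n \<and>
      \<pi> (Suc i) < \<pi> i \<and> \<pi> i < \<pi> j \<and> \<pi> j < \<pi> (Suc j))"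
    unfolding pf_def cp_perm by blast
  have "(\<exists>i j. 1 \<le> i \<and> i < n \<and> 1 \<le> j \<and> j < n \<and>
      \<pi> (Suc i) < \<pi> i \<and> \<pi> i < \<pi> j \<and> \<pi> j < \<pi> (Suc j)) \<longleftrightarrow>
     (\<exists>i j. 1 \<le> i \<and> i + 1 < j \<and> j + 1 \<le> n \<and>
             \<pi> (i+1) < \<pi> i \<and> \<pi> i < \<pi> j \<and> \<pi> j < \<pi> (j+1)) \<or>
     (\<exists>i j. 1 \<le> i \<and> i + 1 < j \<and> j + 1 \<le> n \<and>
             \<pi> (j+1) < \<pi> j \<and> \<pi> j < \<pi> i \<and> \<pi> i < \<pi> (i+1))"
  proof
    assume "\<exists>i j. 1 \<le> i \<and> i < n \<and> 1 \<le> j \<and> j < n \<and>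
      \<pi> (Suc i) < \<pi> i \<and> \<pi> i < \<pi> j \<and> \<pi> j < \<pi> (Suc j)"
    then obtain i j where h: "1 \<le> i" "i < n" "1 \<le> j" "j < n"
      "\<pi> (Suc i) < \<pi> i" "\<pi> i < \<pi> j" "\<pi> j < \<pi> (Suc j)" by blast
    have "i \<noteq> j" using h by auto
    moreover have "j \<noteq> Suc i" using h by auto
    moreover have "i \<noteq> Suc j" using h by auto
    ultimately consider "i + 1 < j" | "j + 1 < i" by linarith
    thus "(\<exists>i j. 1 \<le> i \<and> i + 1 < j \<and> j + 1 \<le> n \<and>
             \<pi> (i+1) < \<pi> i \<and> \<pi> i < \<pi> j \<and> \<pi> j < \<pi> (j+1)) \<or>
     (\<exists>i j. 1 \<le> i \<and> i + 1 < j \<and> j + 1 \<le> n \<and>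
             \<pi> (j+1) < \<pi> j \<and> \<pi> j < \<pi> i \<and> \<pi> i < \<pi> (i+1))"
    proof cases
      case 1 thus ?thesis using h by (intro disjI1 exI[of _ i] exI[of _ j]) auto
    next
      case 2 thus ?thesis using h by (intro disjI2 exI[of _ j] exI[of _ i]) auto
    qed
  next
    assume "(\<exists>i j. 1 \<le> i \<and> i + 1 < j \<and> j + 1 \<le> n \<and>
             \<pi> (i+1) < \<pi> i \<and> \<pi> i < \<pi> j \<and> \<pi> j < \<pi> (j+1)) \<or>
     (\<exists>i j. 1 \<le> i \<and> i + 1 < j \<and> j + 1 \<le> n \<and>
             \<pi> (j+1) < \<pi> j \<and> \<pi> j < \<pi> i \<and> \<pi> i < \<pi> (i+1))"
    thus "\<exists>i j. 1 \<le> i \<and> i < n \<and> 1 \<le> j \<and> j < n \<and>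
      \<pi> (Suc i) < \<pi> i \<and> \<pi> i < \<pi> j \<and> \<pi> j < \<pi> (Suc j)"
    proof
      assume "\<exists>i j. 1 \<le> i \<and> i + 1 < j \<and> j + 1 \<le> n \<and>
             \<pi> (i+1) < \<pi> i \<and> \<pi> i < \<pi> j \<and> \<pi> j < \<pi> (j+1)"
      then obtain i j where "1 \<le> i \<and> i + 1 < j \<and> j + 1 \<le> n \<and>
             \<pi> (i+1) < \<pi> i \<and> \<pi> i < \<pi> j \<and> \<pi> j < \<pi> (j+1)" by blast
      thus ?thesis by (intro exI[of _ i] exI[of _ j]) auto
    next
      assume "\<exists>i j. 1 \<le> i \<and> i + 1 < j \<and> j + 1 \<le> n \<and>
             \<pi> (j+1) < \<pi> j \<and> \<pi> j < \<pi> i \<and> \<pi> i < \<pi> (i+1)"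
      then obtain i j where "1 \<le> i \<and> i + 1 < j \<and> j + 1 \<le> n \<and>
             \<pi> (j+1) < \<pi> j \<and> \<pi> j < \<pi> i \<and> \<pi> i < \<pi> (i+1)" by blast
      thus ?thesis by (intro exI[of _ j] exI[of _ i]) auto
    qed
  qed
  thus ?thesis using e by blast
qed

definition pol :: "nat \<Rightarrow> nat list \<Rightarrow> nat \<Rightarrow> nat" where
  "pol n w = (\<lambda>i. if i \<in> {1..n} then w ! (i - 1) else i)"

lemma perm_word: "\<pi> \<in> Sym n \<Longrightarrow> word n (map \<pi> [1..<n+1])"
proof -
  assume "\<pi> \<in> Sym n"
  hence p: "\<pi> permutes {1..n}" unfolding Sym_def by simp
  have "distinct (map \<pi> [1..<n+1])"
    using permutes_inj_on[OF p, of "{1..<n+1}"] by (simp add: distinct_map del: upt_Suc)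
  moreover have "set (map \<pi> [1..<n+1]) = {1..n}"
    using permutes_image[OF p] by (simp add: atLeastLessThanSuc_atLeastAtMost del: upt_Suc)
  ultimately show ?thesis unfolding word_def by blast
qed

lemma map_pol: "word n w \<Longrightarrow> map (pol n w) [1..<n+1] = w"
  using word_length[of n w] by (intro nth_equalityI) (auto simp: pol_def simp del: upt_Suc)

lemma pol_map: "\<pi> \<in> Sym n \<Longrightarrow> pol n (map \<pi> [1..<n+1]) = \<pi>"
proof
  fix i assume s: "\<pi> \<in> Sym n"
  show "pol n (map \<pi> [1..<n + 1]) i = \<pi> i"
  proof (cases "i \<in> {1..n}")
    case True thus ?thesis unfolding pol_def
      by (auto simp del: upt_Suc)
  next
    case False thus ?thesis using s unfolding pol_def Sym_def by (auto simp add: permutes_not_in simp del: upt_Suc)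
  qed
qed

lemma pol_Sym: "word n w \<Longrightarrow> pol n w \<in> Sym n"
proof -
  assume w: "word n w"
  have len: "length w = n" using word_length[OF w] .
  have "bij_betw (pol n w) {1..n} {1..n}"
  proof (rule bij_betw_imageI)
    show "inj_on (pol n w) {1..n}"
    proof
      fix i j assume "i \<in> {1..n}" "j \<in> {1..n}" "pol n w i = pol n w j"
      hence "w ! (i - 1) = w ! (j - 1)" "i - 1 < length w" "j - 1 < length w" using len unfolding pol_def by auto
      hence "i - 1 = j - 1" using w nth_eq_iff_index_eq unfolding word_def by blast
      thus "i = j" using \<open>i \<in> {1..n}\<close> \<open>j \<in> {1..n}\<close> by auto
    qed
    have "pol n w ` {1..n} = set (map (pol n w) [1..<n+1])" by (simp add: atLeastLessThanSuc_atLeastAtMost del: upt_Suc)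
    also have "\<dots> = {1..n}" using map_pol[OF w] w unfolding word_def by (simp del: upt_Suc)
    finally show "pol n w ` {1..n} = {1..n}" .
  qed
  moreover have "\<And>x. x \<notin> {1..n} \<Longrightarrow> pol n w x = x" unfolding pol_def by auto
  ultimately show ?thesis unfolding Sym_def using bij_imp_permutes by blast
qed

definition Aset :: "nat \<Rightarrow> (nat \<Rightarrow> nat) set" where
  "Aset n = {\<pi> \<in> Sym n.
      \<not> (\<exists>i j. 1 \<le> i \<and> i + 1 < j \<and> j + 1 \<le> n \<and>
             \<pi> (i+1) < \<pi> i \<and> \<pi> i < \<pi> j \<and> \<pi> j < \<pi> (j+1)) \<and>
      \<not> (\<exists>i j. 1 \<le> i \<and> i + 1 < j \<and> j + 1 \<le> n \<and>
             \<pi> (j+1) < \<pi> j \<and> \<pi> j < \<pi> i \<and> \<pi> i < \<pi> (i+1))}"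

lemma Aset_iff: "\<pi> \<in> Aset n \<longleftrightarrow> \<pi> \<in> Sym n \<and> pf (map \<pi> [1..<n+1])"
  unfolding Aset_def using pattern_iff[of n \<pi>] by blast

lemma alpha_words: "alpha n = card {w. word n w \<and> pf w}"
proof -
  have "alpha n = card (Aset n)" unfolding alpha_def Aset_def by simp
  also have "\<dots> = card {w. word n w \<and> pf w}"
  proof (rule bij_betw_same_card)
    show "bij_betw (\<lambda>\<pi>. map \<pi> [1..<n+1]) (Aset n) {w. word n w \<and> pf w}"
    proof (rule bij_betw_byWitness[where f' = "pol n"])
      show "\<forall>a\<in>Aset n. pol n (map a [1..<n + 1]) = a" using pol_map Aset_iff by blast
      show "\<forall>a\<in>{w. word n w \<and> pf w}. map (pol n a) [1..<n + 1] = a" using map_pol by blast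
      show "(\<lambda>\<pi>. map \<pi> [1..<n + 1]) ` Aset n \<subseteq> {w. word n w \<and> pf w}"
        using perm_word Aset_iff by blast
      show "pol n ` {w. word n w \<and> pf w} \<subseteq> Aset n"
      proof
        fix \<pi> assume "\<pi> \<in> pol n ` {w. word n w \<and> pf w}"
        then obtain w where w: "word n w" "pf w" "\<pi> = pol n w" by blast
        have "map \<pi> [1..<n+1] = w" using map_pol[OF w(1)] w(3) by simp
        thus "\<pi> \<in> Aset n" using pol_Sym[OF w(1)] w Aset_iff by simp
      qed
    qed
  qed
  finally show ?thesis .
qed

lemma DL_cons: "L \<in> DL m a \<Longrightarrow> L = a # tl L"
  unfolding DL_def by (cases L) auto

lemma card_Cstar_words: "card (Cstar (Suc m)) = card {w. word m w \<and> sf (Suc m # w)}"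
proof -
  have "card (Cstar (Suc m)) = card (DL (Suc m) (Suc m))" by (rule card_Cstar_DL) simp
  also have "\<dots> = card {w. word m w \<and> sf (Suc m # w)}"
  proof (rule bij_betw_same_card)
    show "bij_betw tl (DL (Suc m) (Suc m)) {w. word m w \<and> sf (Suc m # w)}"
    proof (rule bij_betw_byWitness[where f' = "(#) (Suc m)"])
      show "\<forall>L\<in>DL (Suc m) (Suc m). Suc m # tl L = L" using DL_cons by metis
      show "\<forall>w\<in>{w. word m w \<and> sf (Suc m # w)}. tl (Suc m # w) = w" by simp
      show "tl ` DL (Suc m) (Suc m) \<subseteq> {w. word m w \<and> sf (Suc m # w)}"
      proof
        fix w assume "w \<in> tl ` DL (Suc m) (Suc m)"
        then obtain L where L: "L \<in> DL (Suc m) (Suc m)" "w = tl L" by blast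
        have LL: "L = Suc m # w" using DL_cons[OF L(1)] L(2) by simp
        have "distinct L" "set L = {1..Suc m}" "sf L" using L(1) unfolding DL_def by auto
        hence d: "distinct w" "Suc m \<notin> set w" using LL by auto
        have "set L = insert (Suc m) (set w)" using LL by simp
        hence "set w = set L - {Suc m}" using d(2) by blast
        also have "\<dots> = {1..Suc m} - {Suc m}" using \<open>set L = {1..Suc m}\<close> by simp
        also have "\<dots> = {1..m}" by auto
        finally have "set w = {1..m}" .
        thus "w \<in> {w. word m w \<and> sf (Suc m # w)}" using \<open>sf L\<close> LL d unfolding word_def by simp
      qed
      show "(#) (Suc m) ` {w. word m w \<and> sf (Suc m # w)} \<subseteq> DL (Suc m) (Suc m)"
      proof
        fix L assume "L \<in> (#) (Suc m) ` {w. word m w \<and> sf (Suc m # w)}"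
        then obtain w where w: "word m w" "sf (Suc m # w)" "L = Suc m # w" by blast
        have "set L = insert (Suc m) {1..m}" using w unfolding word_def by simp
        also have "\<dots> = {1..Suc m}" by auto
        finally have "set L = {1..Suc m}" .
        moreover have "distinct L" using w unfolding word_def by simp
        ultimately show "L \<in> DL (Suc m) (Suc m)" using w unfolding DL_def by simp
      qed
    qed
  qed
  finally show ?thesis .
qed




lemma word_Psi: "word n w \<Longrightarrow> word (Suc n) (map Suc w @ [1])"
proof -
  assume w: "word n w"
  have "set (map Suc w @ [1]) = insert 1 (Suc ` {1..n})" using w unfolding word_def by simp
  also have "\<dots> = {1..Suc n}" by (auto simp: image_iff)
  finally show ?thesis using w unfolding word_def by (simp add: distinct_map)
qed

lemma word_Psi': "word n w \<Longrightarrow> word (Suc n) (1 # map Suc w)"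
proof -
  assume w: "word n w"
  have "set (1 # map Suc w) = insert 1 (Suc ` {1..n})" using w unfolding word_def by simp
  also have "\<dots> = {1..Suc n}" by (auto simp: image_iff)
  finally show ?thesis using w unfolding word_def by (simp add: distinct_map)
qed

lemma part2:
  assumes "n \<ge> 1"
  shows "card (Cstar (n+1)) \<le> alpha n \<and>
         alpha n \<le> card (Cstar (n+1)) + card (Cstar (n+2)) \<and>
         card (Cstar (n+1)) + card (Cstar (n+2)) \<le> 2 * card (Cstar (n+2))"
proof -
  define CW where "CW = {w. word n w \<and> sf (Suc n # w)}"
  define CW' where "CW' = {w. word (Suc n) w \<and> sf (Suc (Suc n) # w)}"
  define PW where "PW = {w. word n w \<and> pf w}"
  have c1: "card (Cstar (n+1)) = card CW" unfolding CW_def using card_Cstar_words[of n] by simp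
  have c2: "card (Cstar (n+2)) = card CW'" unfolding CW'_def using card_Cstar_words[of "Suc n"] by simp
  have al: "alpha n = card PW" unfolding PW_def by (rule alpha_words)
  have fCW: "finite CW" "finite CW'" "finite PW" unfolding CW_def CW'_def PW_def by (simp_all add: finite_words)
  have a: "card CW \<le> card PW"
  proof (rule card_mono[OF fCW(3)])
    show "CW \<subseteq> PW" unfolding CW_def PW_def using sf_Phi[OF _ assms] by auto
  qed
  have b: "card PW \<le> card CW + card CW'"
  proof -
    define f where "f = (\<lambda>w. if sf (Suc n # w) then Inl w else Inr (map Suc w @ [1]) :: nat list + nat list)"
    have "inj_on f PW" unfolding f_def inj_on_def by auto
    moreover have "f ` PW \<subseteq> CW <+> CW'"
    proof
      fix x assume "x \<in> f ` PW"
      then obtain w where w: "word n w" "pf w" "x = f w" unfolding PW_def by blast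
      show "x \<in> CW <+> CW'"
      proof (cases "sf (Suc n # w)")
        case True thus ?thesis using w unfolding f_def CW_def by (auto intro: InlI)
      next
        case False
        hence "\<exists>(a,a')\<in>cp w. a' < a \<and> a < last w" using sf_Phi[OF w(1) assms] w(2) by simp
        then obtain a a' where aa: "(a,a') \<in> cp w" "a' < a" "a < last w" by blast
        have nb: "\<not> (\<exists>(b,b')\<in>cp w. b < b' \<and> last w < b)"
        proof
          assume "\<exists>(b,b')\<in>cp w. b < b' \<and> last w < b"
          then obtain b b' where bb: "(b,b') \<in> cp w" "b < b'" "last w < b" by blast
          have "a < b" using aa(3) bb(3) by simp
          thus False using aa(1,2) bb(1,2) w(2) unfolding pf_def by blast
        qed
        have "sf ((n+2) # (map Suc w @ [1]))" using sf_Psi[OF w(1) assms w(2) nb] .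
        hence "map Suc w @ [1] \<in> CW'" using word_Psi[OF w(1)] unfolding CW'_def by simp
        thus ?thesis using False w(3) unfolding f_def by (auto intro: InrI)
      qed
    qed
    ultimately have "card PW \<le> card (CW <+> CW')"
      using card_inj_on_le fCW by (metis finite_Plus)
    thus ?thesis using card_Plus[OF fCW(1,2)] by simp
  qed
  have c: "card CW \<le> card CW'"
  proof (rule card_inj_on_le[where f = "\<lambda>w. 1 # map Suc w"])
    show "inj_on (\<lambda>w. 1 # map Suc w) CW" unfolding inj_on_def by simp
    show "(\<lambda>w. 1 # map Suc w) ` CW \<subseteq> CW'"
    proof
      fix v assume "v \<in> (\<lambda>w. 1 # map Suc w) ` CW"
      then obtain w where w: "word n w" "sf (Suc n # w)" "v = 1 # map Suc w" unfolding CW_def by blast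
      have "sf ((n+2) # 1 # map Suc w)" using sf_Psi'[OF w(1) assms] w(2) by simp
      thus "v \<in> CW'" using word_Psi'[OF w(1)] w(3) unfolding CW'_def by simp
    qed
    show "finite CW'" using fCW by simp
  qed
  show ?thesis using a b c c1 c2 al by simp
qed




fun fw :: "nat \<Rightarrow> nat list \<Rightarrow> nat \<Rightarrow> nat" where
  "fw M [] = id"
| "fw M [x] = (\<lambda>z. if z = x then min M x else z)"
| "fw M (x # y # r) = (\<lambda>z. if z = x then (if min M x < y then y else min M x) else fw (min M x) (y # r) z)"

definition Fw :: "nat list \<Rightarrow> nat \<Rightarrow> nat" where
  "Fw w = (case w of [] \<Rightarrow> id | x # _ \<Rightarrow> fw x w)"

lemma fw_out: "z \<notin> set l \<Longrightarrow> fw M l z = z"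
  by (induction M l rule: fw.induct) auto

lemma Fw_out: "z \<notin> set l \<Longrightarrow> Fw l z = z"
  unfolding Fw_def by (cases l) (auto simp: fw_out)

lemma fw_cons_neq: "z \<noteq> x \<Longrightarrow> fw M (x # l) z = fw (min M x) l z"
  by (cases l) auto

lemma fw_min: "x \<le> M \<Longrightarrow> fw M (x # l) = fw x (x # l)"
  by (cases l) (auto simp: min_def)

lemma fw_app: "z \<notin> set u \<Longrightarrow> fw M (u @ r) z = fw (foldl min M u) r z"
proof (induction u arbitrary: M)
  case (Cons x u)
  thus ?case using fw_cons_neq[of z x M "u @ r"] by simp
qed simp

lemma foldl_min_ge: "(\<forall>x\<in>set U. c \<le> x) \<Longrightarrow> c \<le> M \<Longrightarrow> (c::nat) \<le> foldl min M U"
proof (induction U arbitrary: M)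
  case (Cons a U)
  have "c \<le> min M a" using Cons.prems by simp
  hence "c \<le> foldl min (min M a) U" using Cons.IH[of "min M a"] Cons.prems(1) by simp
  thus ?case by simp
qed simp

lemma fw_pre:
  assumes "distinct (u @ r)" "r \<noteq> []" "hd r < M" "\<forall>x\<in>set u. hd r < x" "z \<in> set u"
  shows "fw M (u @ r) z = fw M u z"
  using assms
proof (induction u arbitrary: M)
  case (Cons x u)
  show ?case
  proof (cases "u = []")
    case True
    then obtain y r' where r: "r = y # r'" using Cons.prems(2) by (cases r) auto
    have "z = x" using Cons.prems(5) True by simp
    moreover have "\<not> min M x < y" using Cons.prems(3,4) r by auto
    ultimately show ?thesis using True r by simp
  next
    case False
    then obtain y u' where u: "u = y # u'" by (cases u) auto
    show ?thesis
    proof (cases "z = x")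
      case True thus ?thesis using u by simp
    next
      case False
      hence "z \<in> set u" using Cons.prems(5) by simp
      have "fw M ((x # u) @ r) z = fw (min M x) (u @ r) z" using fw_cons_neq[OF False] by simp
      also have "\<dots> = fw (min M x) u z"
        using Cons.IH[of "min M x"] Cons.prems \<open>z \<in> set u\<close> by simp
      also have "\<dots> = fw M (x # u) z" using fw_cons_neq[OF False] by simp
      finally show ?thesis .
    qed
  qed
qed simp

lemma fw_run:
  assumes "distinct v" "\<forall>x\<in>set v. m < x" "j < length v"
  shows "fw m v (v!j) = (if Suc j < length v then v!(Suc j) else m)"
  using assms
proof (induction v arbitrary: j)
  case (Cons x v)
  show ?case
  proof (cases j)
    case 0
    thus ?thesis using Cons.prems by (cases v) auto
  next
    case (Suc j')
    have "v ! j' \<in> set v" using Cons.prems(3) Suc by simp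
    hence ne: "v ! j' \<noteq> x" using Cons.prems(1) by auto
    have "fw m (x # v) ((x # v) ! j) = fw (min m x) v (v ! j')" using fw_cons_neq[OF ne] Suc by simp
    also have "min m x = m" using Cons.prems(2) by simp
    also have "fw m v (v ! j') = (if Suc j' < length v then v ! Suc j' else m)"
      using Cons.IH[of j'] Cons.prems Suc by simp
    finally show ?thesis using Suc by simp
  qed
qed simp

lemma fw_block:
  assumes "distinct (m # v)" "\<forall>x\<in>set v. m < x" "m \<le> M" "z \<in> set (m # v)"
  shows "fw M (m # v) z = cycle_of_list (m # v) z"
proof -
  obtain i where i: "i < length (m # v)" "z = (m # v) ! i" using assms(4) by (metis in_set_conv_nth)
  have c: "cycle_of_list (m # v) z = (m # v) ! (Suc i mod length (m # v))" using cyc_nth[OF assms(1) i(1)] i(2) by simp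
  show ?thesis
  proof (cases i)
    case 0
    thus ?thesis using c i assms by (cases v) (auto simp: min_def)
  next
    case (Suc j)
    have ne: "z \<noteq> m" using assms(1) i Suc by auto
    have "fw M (m # v) z = fw m v (v ! j)" using fw_cons_neq[OF ne, of M v] assms(3) i(2) Suc by (simp add: min_def)
    also have "\<dots> = (if Suc j < length v then v!(Suc j) else m)" using fw_run[of v m j] assms i Suc by simp
    also have "\<dots> = (m # v) ! (Suc i mod length (m # v))"
    proof (cases "Suc j < length v")
      case True thus ?thesis using Suc by simp
    next
      case False
      hence "length v = Suc j" using i Suc by simp
      thus ?thesis using False Suc by simp
    qed
    finally show ?thesis using c by simp
  qed
qed

lemma fw_le: "z \<in> set w \<Longrightarrow> fw M w z \<le> z \<or> (z, fw M w z) \<in> cp w"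
proof (induction M w rule: fw.induct)
  case (3 M x y r)
  show ?case
  proof (cases "z = x")
    case True thus ?thesis by auto
  next
    case False
    hence "z \<in> set (y # r)" using 3(2) by simp
    thus ?thesis using 3(1)[OF False] False by auto
  qed
qed auto

lemma cp_unique: "distinct w \<Longrightarrow> (a, p) \<in> cp w \<Longrightarrow> (a, q) \<in> cp w \<Longrightarrow> p = q"
proof (induction w rule: induct_list012)
  case (3 x y zs)
  thus ?case by (auto dest: cp_set)
qed auto

lemma fw_asc: "distinct w \<Longrightarrow> (z, z') \<in> cp w \<Longrightarrow> z < z' \<Longrightarrow> fw M w z = z'"
proof (induction M w rule: fw.induct)
  case (3 M x y r)
  show ?case
  proof (cases "z = x")
    case True
    hence "z' = y" using 3(2,3) cp_unique[OF 3(2), of x z' y] by auto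
    have "min M x < y" using 3(4) True \<open>z' = y\<close> by (simp add: min_less_iff_disj)
    thus ?thesis using True \<open>z' = y\<close> by simp
  next
    case False
    hence "(z, z') \<in> cp (y # r)" using 3(3) by simp
    thus ?thesis using 3 False by simp
  qed
qed auto

lemma cp_not_last: "distinct w \<Longrightarrow> (x, y) \<in> cp w \<Longrightarrow> x \<noteq> last w"
proof (induction w rule: induct_list012)
  case (3 x y zs)
  thus ?case using cp_set by (cases zs) auto
qed auto

lemma cp_exists_succ: "z \<in> set w \<Longrightarrow> z \<noteq> last w \<Longrightarrow> \<exists>z'. (z, z') \<in> cp w"
proof (induction w rule: induct_list012)
  case (3 x y zs)
  thus ?case by (cases "z = x") auto
qed auto

lemma fw_last: "distinct w \<Longrightarrow> w \<noteq> [] \<Longrightarrow> fw M w (last w) \<le> last w"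
  using fw_le[of "last w" w M] cp_not_last by fastforce




primrec Wf :: "(nat \<Rightarrow> nat) \<Rightarrow> nat set \<Rightarrow> nat \<Rightarrow> nat list" where
  "Wf t S 0 = []"
| "Wf t S (Suc k) = (if S = {} then [] else Wf t (S - set (support t (Min S))) k @ support t (Min S))"

lemma supp_props:
  assumes "permutation t"
  shows "distinct (support t a) \<and> support t a \<noteq> [] \<and> hd (support t a) = a \<and> a \<in> set (support t a)"
proof -
  have lp: "least_power t a > 0" using least_power_of_permutation(2)[OF assms] .
  have "distinct (support t a)" using cycle_of_permutation[OF assms] .
  moreover have "support t a \<noteq> []" using lp by simp
  moreover have "hd (support t a) = a" using lp by (simp add: hd_map)
  ultimately show ?thesis using hd_in_set by metis
qed

lemma supp_closed:
  assumes "permutation t" "a \<in> S" "t ` S \<subseteq> S"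
  shows "set (support t a) \<subseteq> S"
proof -
  have "(t ^^ i) a \<in> S" for i
    by (induction i) (use assms in auto)
  thus ?thesis using support_set[OF assms(1)] by auto
qed

lemma supp_back:
  assumes "permutation t" "t x \<in> set (support t a)"
  shows "x \<in> set (support t a)"
proof -
  obtain i where i: "t x = (t ^^ i) a" using assms(2) support_set[OF assms(1)] by auto
  define lp where "lp = least_power t a"
  have lp: "lp > 0" "(t ^^ lp) a = a" using least_power_of_permutation[OF assms(1)] unfolding lp_def by auto
  have "t ((t ^^ (i + lp - 1)) a) = (t ^^ (Suc (i + lp - 1))) a" by simp
  also have "Suc (i + lp - 1) = i + lp" using lp by simp
  also have "(t ^^ (i + lp)) a = (t ^^ i) ((t ^^ lp) a)" by (simp add: funpow_add)
  also have "\<dots> = t x" using lp i by simp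
  finally have "t ((t ^^ (i + lp - 1)) a) = t x" .
  moreover have "inj t" using assms(1) permutation_bijective bij_is_inj by blast
  ultimately have "x = (t ^^ (i + lp - 1)) a" by (metis injD)
  thus ?thesis using support_set[OF assms(1)] by auto
qed

lemma Wf_step:
  assumes "permutation t" "finite S" "t ` S \<subseteq> S" "S \<noteq> {}"
  defines "m \<equiv> Min S"
  defines "B \<equiv> support t m"
  shows "m \<in> S" "set B \<subseteq> S" "m \<in> set B" "distinct B" "B = m # tl B"
    "t ` (S - set B) \<subseteq> S - set B" "card (S - set B) < card S" "\<forall>x\<in>S - set B. m < x"
    "\<forall>x\<in>set (tl B). m < x" "finite (S - set B)"
proof -
  show m: "m \<in> S" unfolding m_def using assms(2,4) by simp
  show sb: "set B \<subseteq> S" unfolding B_def using supp_closed[OF assms(1) m assms(3)] .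
  have sp: "distinct B \<and> B \<noteq> [] \<and> hd B = m \<and> m \<in> set B" unfolding B_def using supp_props[OF assms(1)] .
  thus "m \<in> set B" "distinct B" by auto
  show "B = m # tl B" using sp by (metis list.collapse)
  show "t ` (S - set B) \<subseteq> S - set B"
  proof
    fix y assume "y \<in> t ` (S - set B)"
    then obtain x where x: "x \<in> S - set B" "y = t x" by blast
    have "t x \<in> S" using x assms(3) by auto
    moreover have "t x \<notin> set B" using supp_back[OF assms(1), of x m] x unfolding B_def by auto
    ultimately show "y \<in> S - set B" using x by simp
  qed
  show "card (S - set B) < card S"
  proof (rule psubset_card_mono[OF assms(2)])
    show "S - set B \<subset> S" using sp m by blast
  qed
  have mle: "\<forall>x\<in>S. m \<le> x" unfolding m_def using assms(2) by simp
  show "\<forall>x\<in>S - set B. m < x"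
  proof
    fix x assume x: "x \<in> S - set B"
    hence "x \<noteq> m" using sp by auto
    moreover have "m \<le> x" using mle x by blast
    ultimately show "m < x" by simp
  qed
  show "\<forall>x\<in>set (tl B). m < x"
  proof
    fix x assume x: "x \<in> set (tl B)"
    have "B = m # tl B" using sp by (metis list.collapse)
    hence "x \<noteq> m" using sp x by (metis distinct.simps(2))
    moreover have "x \<in> S" using x sb by (meson list.set_sel(2) sp subsetD)
    moreover have "m \<le> x" using mle \<open>x \<in> S\<close> by blast
    ultimately show "m < x" by simp
  qed
  show "finite (S - set B)" using assms(2) by simp
qed

lemma Wf_props:
  assumes "permutation t" "finite S" "t ` S \<subseteq> S" "card S \<le> k"
  shows "distinct (Wf t S k) \<and> set (Wf t S k) = S"
  using assms
proof (induction k arbitrary: S)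
  case 0
  hence "S = {}" by simp
  thus ?case by simp
next
  case (Suc k)
  show ?case
  proof (cases "S = {}")
    case True thus ?thesis by simp
  next
    case False
    define m where "m = Min S"
    define B where "B = support t m"
    note st = Wf_step[OF Suc.prems(1-3) False, folded m_def, folded B_def]
    have IH: "distinct (Wf t (S - set B) k) \<and> set (Wf t (S - set B) k) = S - set B"
      using Suc.IH[OF Suc.prems(1) st(10) st(6)] st(7) Suc.prems(4) by simp
    have e: "Wf t S (Suc k) = Wf t (S - set B) k @ B" using False unfolding m_def B_def by simp
    have dj: "set (Wf t (S - set B) k) \<inter> set B = {}" using IH by blast
    have "distinct (Wf t (S - set B) k @ B)" using IH st(4) dj by simp
    moreover have "set (Wf t (S - set B) k @ B) = (S - set B) \<union> set B" using IH by simp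
    moreover have "(S - set B) \<union> set B = S" using st(2) by blast
    ultimately show ?thesis unfolding e by simp
  qed
qed

lemma Wf_fw:
  assumes "permutation t" "finite S" "t ` S \<subseteq> S" "card S \<le> k" "\<forall>x\<in>S. x < M"
  shows "\<forall>z\<in>S. fw M (Wf t S k) z = t z"
  using assms
proof (induction k arbitrary: S)
  case 0
  hence "S = {}" by simp
  thus ?case by simp
next
  case (Suc k)
  show ?case
  proof (cases "S = {}")
    case True thus ?thesis by simp
  next
    case False
    define m where "m = Min S"
    define B where "B = support t m"
    define U where "U = Wf t (S - set B) k"
    note st = Wf_step[OF Suc.prems(1-3) False, folded m_def, folded B_def]
    have U: "distinct U \<and> set U = S - set B" unfolding U_def
      using Wf_props[OF Suc.prems(1) st(10) st(6)] st(7) Suc.prems(4) by simp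
    have IH: "\<forall>z\<in>S - set B. fw M U z = t z" unfolding U_def
      using Suc.IH[OF Suc.prems(1) st(10) st(6)] st(7) Suc.prems(4,5) by simp
    have e: "Wf t S (Suc k) = U @ B" using False unfolding m_def B_def U_def by simp
    have dj: "set U \<inter> set B = {}" using U by blast
    have d: "distinct (U @ B)" using U st(4) dj by simp
    have mM: "m < M" using st(1) Suc.prems(5) by simp
    show ?thesis unfolding e
    proof
      fix z assume z: "z \<in> S"
      show "fw M (U @ B) z = t z"
      proof (cases "z \<in> set B")
        case False
        hence zU: "z \<in> set U" using z U by simp
        have "fw M (U @ B) z = fw M U z"
        proof (rule fw_pre[OF d])
          show "B \<noteq> []" using st(5) by (metis list.distinct(1))
          have hB: "hd B = m" using st(5) by (metis list.sel(1))
          show "hd B < M" using hB mM by simp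
          show "\<forall>x\<in>set U. hd B < x" using hB U st(8) by simp
          show "z \<in> set U" using zU .
        qed
        thus ?thesis using IH zU U by simp
      next
        case True
        hence zU: "z \<notin> set U" using U by simp
        have "fw M (U @ B) z = fw (foldl min M U) B z" using fw_app[OF zU] .
        also have "\<dots> = cycle_of_list B z"
        proof -
          have "\<forall>x\<in>set U. m \<le> x"
          proof
            fix x assume "x \<in> set U"
            hence "x \<in> S - set B" using U by simp
            hence "m < x" using st(8) by blast
            thus "m \<le> x" by simp
          qed
          hence "m \<le> foldl min M U" using foldl_min_ge[of U m M] mM by simp
          hence "fw (foldl min M U) (m # tl B) z = cycle_of_list (m # tl B) z"
            using fw_block[of m "tl B" "foldl min M U" z] st(4,5,9) True by simp
          thus ?thesis using st(5) by simp
        qed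
        also have "\<dots> = t z" using cycle_restrict[OF Suc.prems(1), of z m] True unfolding B_def by simp
        finally show ?thesis .
      qed
    qed
  qed
qed




lemma Fw_ne: "w \<noteq> [] \<Longrightarrow> Fw w = fw (hd w) w"
  unfolding Fw_def by (cases w) auto

lemma split_min:
  assumes "distinct w" "w \<noteq> []"
  obtains u v where "w = u @ Min (set w) # v" "\<forall>x\<in>set u. Min (set w) < x" "\<forall>x\<in>set v. Min (set w) < x"
proof -
  define m where "m = Min (set w)"
  have m: "m \<in> set w" unfolding m_def using assms(2) by simp
  obtain u v where uv: "w = u @ m # v" using split_list[OF m] by blast
  have mle: "\<forall>x\<in>set w. m \<le> x" unfolding m_def by simp
  have "\<forall>x\<in>set u. m < x"
  proof
    fix x assume x: "x \<in> set u"
    hence "x \<noteq> m" using assms(1) uv by auto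
    moreover have "m \<le> x" using mle x uv by simp
    ultimately show "m < x" by simp
  qed
  moreover have "\<forall>x\<in>set v. m < x"
  proof
    fix x assume x: "x \<in> set v"
    hence "x \<noteq> m" using assms(1) uv by auto
    moreover have "m \<le> x" using mle x uv by simp
    ultimately show "m < x" by simp
  qed
  ultimately show ?thesis using that uv unfolding m_def by blast
qed

lemma FwA:
  assumes "distinct (u @ m # v)" "\<forall>x\<in>set u. m < x" "z \<in> set u"
  shows "Fw (u @ m # v) z = Fw u z"
proof -
  have une: "u \<noteq> []" using assms(3) by auto
  have "Fw (u @ m # v) z = fw (hd u) (u @ m # v) z" using Fw_ne[of "u @ m # v"] une by simp
  also have "\<dots> = fw (hd u) u z"
  proof (rule fw_pre[OF assms(1)])
    show "m # v \<noteq> []" by simp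
    show "hd (m # v) < hd u" using assms(2) une by simp
    show "\<forall>x\<in>set u. hd (m # v) < x" using assms(2) by simp
    show "z \<in> set u" using assms(3) .
  qed
  also have "\<dots> = Fw u z" using Fw_ne[OF une] by simp
  finally show ?thesis .
qed

lemma FwB:
  assumes "distinct (u @ m # v)" "\<forall>x\<in>set u. m < x" "\<forall>x\<in>set v. m < x" "z \<in> set (m # v)"
  shows "Fw (u @ m # v) z = cycle_of_list (m # v) z"
proof -
  have zu: "z \<notin> set u" using assms(1,4) by auto
  have h: "m \<le> hd (u @ m # v)" using assms(2) by (cases u) auto
  have "Fw (u @ m # v) z = fw (hd (u @ m # v)) (u @ m # v) z" using Fw_ne[of "u @ m # v"] by simp
  also have "\<dots> = fw (foldl min (hd (u @ m # v)) u) (m # v) z" using fw_app[OF zu] .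
  also have "\<dots> = cycle_of_list (m # v) z"
  proof (rule fw_block)
    show "distinct (m # v)" using assms(1) by simp
    show "\<forall>x\<in>set v. m < x" using assms(3) .
    have "\<forall>x\<in>set u. m \<le> x" using assms(2) by auto
    thus "m \<le> foldl min (hd (u @ m # v)) u" using foldl_min_ge h by blast
    show "z \<in> set (m # v)" using assms(4) .
  qed
  finally show ?thesis .
qed

lemma Fw_permutes: "distinct w \<Longrightarrow> Fw w permutes set w"
proof (induction "length w" arbitrary: w rule: less_induct)
  case less
  show ?case
  proof (cases "w = []")
    case True thus ?thesis unfolding Fw_def by simp
  next
    case False
    obtain u v where uv: "w = u @ Min (set w) # v" "\<forall>x\<in>set u. Min (set w) < x" "\<forall>x\<in>set v. Min (set w) < x"
      using split_min[OF less.prems False] by blast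
    define m where "m = Min (set w)"
    have uv': "w = u @ m # v" "\<forall>x\<in>set u. m < x" "\<forall>x\<in>set v. m < x" using uv unfolding m_def by auto
    have d: "distinct (u @ m # v)" using less.prems uv' by simp
    have pu: "Fw u permutes set u" using less.hyps[of u] d uv'(1) by simp
    have eq: "Fw w = cycle_of_list (m # v) \<circ> Fw u"
    proof
      fix z
      consider "z \<in> set u" | "z \<in> set (m # v)" | "z \<notin> set w" using uv'(1) by auto
      thus "Fw w z = (cycle_of_list (m # v) \<circ> Fw u) z"
      proof cases
        case 1
        have "Fw u z \<in> set u" using permutes_in_image[OF pu] 1 by simp
        hence "Fw u z \<notin> set (m # v)" using d by auto
        thus ?thesis using FwA[OF d uv'(2) 1] uv'(1) id_outside_supp[of "Fw u z" "m # v"] by simp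
      next
        case 2
        have "z \<notin> set u" using d 2 by auto
        thus ?thesis using FwB[OF d uv'(2,3) 2] uv'(1) Fw_out by simp
      next
        case 3
        hence "z \<notin> set u" "z \<notin> set (m # v)" using uv'(1) by auto
        thus ?thesis using Fw_out[OF 3] Fw_out[of z u] id_outside_supp[of z "m # v"] by simp
      qed
    qed
    have s1: "set u \<subseteq> set w" "set (m # v) \<subseteq> set w" using uv'(1) by auto
    have "Fw u permutes set w" using permutes_subset[OF pu s1(1)] .
    moreover have "cycle_of_list (m # v) permutes set w" using permutes_subset[OF cycle_permutes s1(2)] .
    ultimately show ?thesis unfolding eq by (rule permutes_compose)
  qed
qed

lemma Wf_recover:
  "distinct w \<Longrightarrow> length w \<le> k \<Longrightarrow> (\<forall>z\<in>set w. t z = Fw w z) \<Longrightarrow> Wf t (set w) k = w"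
proof (induction k arbitrary: w)
  case 0 thus ?case by simp
next
  case (Suc k)
  show ?case
  proof (cases "w = []")
    case True thus ?thesis by simp
  next
    case False
    obtain u v where uv: "w = u @ Min (set w) # v" "\<forall>x\<in>set u. Min (set w) < x" "\<forall>x\<in>set v. Min (set w) < x"
      using split_min[OF Suc.prems(1) False] by blast
    define m where "m = Min (set w)"
    have uv': "w = u @ m # v" "\<forall>x\<in>set u. m < x" "\<forall>x\<in>set v. m < x" using uv unfolding m_def by auto
    have d: "distinct (u @ m # v)" using Suc.prems uv' by simp
    have agB: "\<forall>x\<in>set (m # v). t x = cycle_of_list (m # v) x"
      using FwB[OF d uv'(2,3)] Suc.prems(3) uv'(1) by auto
    have sB: "support t m = m # v" using support_agree[of "m # v" t] agB d by simp
    have agU: "\<forall>z\<in>set u. t z = Fw u z" using FwA[OF d uv'(2)] Suc.prems(3) uv'(1) by auto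
    have IH: "Wf t (set u) k = u" using Suc.IH[of u] d agU Suc.prems(2) uv'(1) by simp
    have sd: "set w - set (m # v) = set u" using d uv'(1) by auto
    have "Wf t (set w) (Suc k) = Wf t (set w - set (support t m)) k @ support t m"
      using False unfolding m_def by simp
    also have "\<dots> = u @ m # v" using sB sd IH by simp
    finally show ?thesis using uv'(1) by simp
  qed
qed




definition Tset :: "nat \<Rightarrow> (nat \<Rightarrow> nat) set" where
  "Tset n = {\<tau> \<in> Sym n. \<exists>k<n. \<forall>i\<in>{1..n-1}. (i < \<tau> i \<longleftrightarrow> i \<le> k)}"

definition Gm :: "nat \<Rightarrow> (nat \<Rightarrow> nat) \<Rightarrow> nat list" where
  "Gm n \<tau> = 1 # map Suc (Wf \<tau> {1..n} n)"

definition gm :: "nat list \<Rightarrow> nat \<Rightarrow> nat" where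
  "gm L = Fw (map (\<lambda>x. x - 1) (tl L))"

lemma Sym_in: "\<tau> \<in> Sym n \<Longrightarrow> z \<in> {1..n} \<Longrightarrow> \<tau> z \<in> {1..n}"
  unfolding Sym_def by (metis mem_Collect_eq permutes_in_image)

lemma T_order:
  assumes "\<tau> \<in> Tset n" "a \<in> {1..n}" "b \<in> {1..n}" "\<tau> a \<le> a" "b < \<tau> b"
  shows "\<not> a < b"
proof
  assume ab: "a < b"
  obtain k where k: "k < n" "\<forall>i\<in>{1..n-1}. (i < \<tau> i \<longleftrightarrow> i \<le> k)" using assms(1) unfolding Tset_def by blast
  have "\<tau> b \<le> n" using Sym_in[of \<tau> n b] assms(1,3) unfolding Tset_def by auto
  hence "b \<in> {1..n-1}" using assms(3,5) by auto
  hence "b \<le> k" using k assms(5) by blast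
  have "a \<in> {1..n-1}" using assms(2) ab \<open>b \<in> {1..n-1}\<close> by auto
  hence "a < \<tau> a" using k \<open>b \<le> k\<close> ab by auto
  thus False using assms(4) by simp
qed

lemma order_T:
  assumes "\<tau> \<in> Sym n" "n \<ge> 1"
    "\<forall>a\<in>{1..n}. \<forall>b\<in>{1..n}. \<tau> a \<le> a \<longrightarrow> b < \<tau> b \<longrightarrow> \<not> a < b"
  shows "\<tau> \<in> Tset n"
proof -
  define K where "K = {i \<in> {1..n-1}. i < \<tau> i}"
  define k where "k = (if K = {} then 0 else Max K)"
  have fK: "finite K" unfolding K_def by simp
  have "k < n"
  proof (cases "K = {}")
    case True thus ?thesis using assms(2) unfolding k_def by simp
  next
    case False
    hence "Max K \<in> K" using fK by simp
    thus ?thesis using False assms(2) unfolding k_def K_def by auto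
  qed
  moreover have "\<forall>i\<in>{1..n-1}. (i < \<tau> i \<longleftrightarrow> i \<le> k)"
  proof
    fix i assume i: "i \<in> {1..n-1}"
    show "i < \<tau> i \<longleftrightarrow> i \<le> k"
    proof
      assume "i < \<tau> i"
      hence "i \<in> K" using i unfolding K_def by simp
      thus "i \<le> k" using fK unfolding k_def by auto
    next
      assume ik: "i \<le> k"
      hence ne: "K \<noteq> {}" using i unfolding k_def by auto
      hence mk: "Max K \<in> K" using fK by simp
      hence b: "Max K \<in> {1..n}" "Max K < \<tau> (Max K)" unfolding K_def by auto
      show "i < \<tau> i"
      proof (rule ccontr)
        assume "\<not> i < \<tau> i"
        hence "\<tau> i \<le> i" by simp
        moreover have "i \<noteq> Max K" using b \<open>\<not> i < \<tau> i\<close> by auto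
        hence "i < Max K" using ik ne unfolding k_def by simp
        moreover have "i \<in> {1..n}" using i by auto
        ultimately show False using assms(3) b by blast
      qed
    qed
  qed
  ultimately show ?thesis using assms(1) unfolding Tset_def by blast
qed

lemma cp_neq: "distinct w \<Longrightarrow> (x, y) \<in> cp w \<Longrightarrow> x \<noteq> y"
proof (induction w rule: induct_list012)
  case (3 x y zs) thus ?case by auto
qed auto

lemma fw_def_step:
  assumes "distinct w" "(a, a') \<in> cp w" "a' < a"
  shows "fw M w a \<le> a"
proof -
  have "a \<in> set w" using cp_set[OF assms(2)] by simp
  from fw_le[OF this, of M] show ?thesis
  proof
    assume "(a, fw M w a) \<in> cp w"
    hence "fw M w a = a'" using cp_unique[OF assms(1)] assms(2) by blast
    thus ?thesis using assms(3) by simp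
  qed
qed

lemma W_facts:
  assumes "\<tau> \<in> Sym n" "n \<ge> 1"
  defines "W \<equiv> Wf \<tau> {1..n} n"
  shows "distinct W" "set W = {1..n}" "W \<noteq> []" "Fw W = \<tau>"
proof -
  have p: "\<tau> permutes {1..n}" using assms(1) unfolding Sym_def by simp
  have perm: "permutation \<tau>" using p permutation_permutes by blast
  have cl: "\<tau> ` {1..n} \<subseteq> {1..n}" using permutes_image[OF p] by simp
  have wp: "distinct W \<and> set W = {1..n}" unfolding W_def using Wf_props[OF perm _ cl] by simp
  thus "distinct W" "set W = {1..n}" by auto
  thus ne: "W \<noteq> []" using assms(2) by auto
  have fwW: "\<forall>z\<in>{1..n}. fw (Suc n) W z = \<tau> z" unfolding W_def using Wf_fw[OF perm _ cl] by simp
  have hW: "hd W \<le> Suc n" using hd_in_set[OF ne] wp by auto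
  have "Fw W = fw (Suc n) W" using Fw_ne[OF ne] fw_min[OF hW, of "tl W"] ne by simp
  show "Fw W = \<tau>"
  proof
    fix z show "Fw W z = \<tau> z"
    proof (cases "z \<in> {1..n}")
      case True thus ?thesis using fwW \<open>Fw W = fw (Suc n) W\<close> by simp
    next
      case False thus ?thesis using Fw_out[of z W] wp permutes_not_in[OF p] by simp
    qed
  qed
qed

lemma edges_G:
  assumes "W \<noteq> []"
  shows "edges (1 # map Suc W) = insert (1, Suc (hd W)) (insert (Suc (last W), 1) ((\<lambda>(x,y). (Suc x, Suc y)) ` cp W))"
  using edges_Cons[of "map Suc W" 1] assms by (simp add: cp_map hd_map last_map)

lemma edges_G_ge1:
  assumes "W \<noteq> []" "(x, y) \<in> edges (1 # map Suc W)"
  shows "1 \<le> x"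
  using assms(2) unfolding edges_G[OF assms(1)] by auto




lemma G_in_DL:
  assumes "n \<ge> 1" "\<tau> \<in> Tset n"
  shows "Gm n \<tau> \<in> DL (n+1) 1"
proof -
  have s: "\<tau> \<in> Sym n" using assms(2) unfolding Tset_def by simp
  define W where "W = Wf \<tau> {1..n} n"
  note wf = W_facts[OF s assms(1), folded W_def]
  have F: "\<And>z. \<tau> z = fw (hd W) W z" using wf(4) Fw_ne[OF wf(3)] by metis
  have GL: "Gm n \<tau> = 1 # map Suc W" unfolding Gm_def W_def by simp
  have d: "distinct (1 # map Suc W)"
  proof -
    have "0 \<notin> set W" using wf(2) by auto
    hence "1 \<notin> set (map Suc W)" by auto
    thus ?thesis using wf(1) by (simp add: distinct_map)
  qed
  have st: "set (1 # map Suc W) = {1..n+1}"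
  proof -
    have "set (1 # map Suc W) = insert 1 (Suc ` {1..n})" using wf(2) by simp
    also have "\<dots> = {1..n+1}" by (auto simp: image_iff)
    finally show ?thesis .
  qed
  have sf: "sf (1 # map Suc W)"
  proof (rule ccontr)
    assume "\<not> sf (1 # map Suc W)"
    then obtain x x' y y' where xy: "(x,x') \<in> edges (1 # map Suc W)" "(y,y') \<in> edges (1 # map Suc W)"
        "x' < x" "x < y" "y < y'" by (rule not_sfE)
    note e = edges_G[OF wf(3)]
    have x1: "1 \<le> x" using edges_G_ge1[OF wf(3) xy(1)] .
    obtain b where b: "y = Suc b" "b \<in> set W" "b < \<tau> b"
    proof -
      consider "(y,y') = (1, Suc (hd W))" | "(y,y') = (Suc (last W), 1)"
        | "(y,y') \<in> (\<lambda>(x,y). (Suc x, Suc y)) ` cp W" using xy(2) unfolding e by blast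
      thus ?thesis
      proof cases
        case 1 thus ?thesis using x1 xy(4) by simp
      next
        case 2 thus ?thesis using xy(5) by simp
      next
        case 3
        then obtain b b' where bb: "(b,b') \<in> cp W" "y = Suc b" "y' = Suc b'" by auto
        have "b < b'" using bb xy(5) by simp
        hence "\<tau> b = b'" using F fw_asc[OF wf(1) bb(1)] by simp
        thus ?thesis using that bb cp_set[OF bb(1)] \<open>b < b'\<close> by simp
      qed
    qed
    obtain a where a: "x = Suc a" "a \<in> set W" "\<tau> a \<le> a"
    proof -
      consider "(x,x') = (1, Suc (hd W))" | "(x,x') = (Suc (last W), 1)"
        | "(x,x') \<in> (\<lambda>(x,y). (Suc x, Suc y)) ` cp W" using xy(1) unfolding e by blast
      thus ?thesis
      proof cases
        case 1 thus ?thesis using xy(3) by simp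
      next
        case 2
        have "\<tau> (last W) \<le> last W" using F fw_last[OF wf(1,3)] by simp
        thus ?thesis using that 2 last_in_set[OF wf(3)] by simp
      next
        case 3
        then obtain a a' where aa: "(a,a') \<in> cp W" "x = Suc a" "x' = Suc a'" by auto
        have "a' < a" using aa xy(3) by simp
        hence "\<tau> a \<le> a" using F fw_def_step[OF wf(1) aa(1)] by simp
        thus ?thesis using that aa cp_set[OF aa(1)] by simp
      qed
    qed
    have "a < b" using a(1) b(1) xy(4) by simp
    moreover have "\<not> a < b" using T_order[OF assms(2), of a b] a b wf(2) by simp
    ultimately show False by simp
  qed
  show ?thesis unfolding DL_def GL using d st sf by simp
qed

lemma g_in_T:
  assumes "n \<ge> 1" "L \<in> DL (n+1) 1"
  shows "gm L \<in> Tset n \<and> Gm n (gm L) = L"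
proof -
  define w where "w = map (\<lambda>x. x - 1) (tl L)"
  have LL: "L = 1 # tl L" using DL_cons[OF assms(2)] .
  have dL: "distinct L" "set L = {1..n+1}" "sf L" using assms(2) unfolding DL_def by auto
  have stl: "set (tl L) = {2..n+1}"
  proof -
    have "set L = insert 1 (set (tl L))" using LL by (metis list.simps(15))
    moreover have "1 \<notin> set (tl L)" using dL(1) LL by (metis distinct.simps(2))
    ultimately have "set (tl L) = set L - {1}" by blast
    also have "\<dots> = {2..n+1}" using dL(2) by auto
    finally show ?thesis .
  qed
  have mw: "map Suc w = tl L"
  proof -
    have "map Suc w = map (\<lambda>x. Suc (x - 1)) (tl L)" unfolding w_def by simp
    also have "\<dots> = tl L" using stl by (intro map_idI) auto
    finally show ?thesis .
  qed
  have L2: "L = 1 # map Suc w" using LL mw by simp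
  have dw: "distinct w" using dL(1) L2 by (simp add: distinct_map)
  have sw: "set w = {1..n}"
  proof -
    have "Suc ` set w = {2..n+1}" using mw stl by (metis list.set_map)
    hence "set w = (\<lambda>x. x - 1) ` {2..n+1}" by (metis (no_types, lifting) diff_Suc_1 image_comp image_cong image_ident comp_apply)
    also have "\<dots> = {1..n}"
    proof
      show "(\<lambda>x. x - 1) ` {2..n+1} \<subseteq> {1..n}" by auto
      show "{1..n} \<subseteq> (\<lambda>x. x - 1) ` {2..n+1}"
      proof
        fix z assume "z \<in> {1..n}"
        hence "Suc z \<in> {2..n+1}" "z = Suc z - 1" by auto
        thus "z \<in> (\<lambda>x. x - 1) ` {2..n+1}" by blast
      qed
    qed
    finally show ?thesis .
  qed
  have lw: "length w = n" using distinct_card[OF dw] sw by simp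
  define \<tau> where "\<tau> = Fw w"
  have gL: "gm L = \<tau>" unfolding gm_def \<tau>_def w_def by simp
  have p: "\<tau> permutes {1..n}" unfolding \<tau>_def using Fw_permutes[OF dw] sw by simp
  hence s: "\<tau> \<in> Sym n" unfolding Sym_def by simp
  have Wr: "Wf \<tau> {1..n} n = w" using Wf_recover[OF dw, of n \<tau>] lw sw unfolding \<tau>_def by simp
  have GG: "Gm n (gm L) = L" unfolding gL Gm_def Wr using L2 by simp
  have wne: "w \<noteq> []" using sw assms(1) by auto
  have F: "\<And>z. \<tau> z = fw (hd w) w z" unfolding \<tau>_def using Fw_ne[OF wne] by simp
  have ord: "\<forall>a\<in>{1..n}. \<forall>b\<in>{1..n}. \<tau> a \<le> a \<longrightarrow> b < \<tau> b \<longrightarrow> \<not> a < b"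
  proof (intro ballI impI notI)
    fix a b assume ab: "a \<in> {1..n}" "b \<in> {1..n}" "\<tau> a \<le> a" "b < \<tau> b" "a < b"
    note e = edges_G[OF wne]
    have "b \<in> set w" using ab sw by simp
    have bc: "(b, \<tau> b) \<in> cp w" using fw_le[OF \<open>b \<in> set w\<close>, of "hd w"] F ab(4) by force
    have "(Suc b, Suc (\<tau> b)) \<in> (\<lambda>(x,y). (Suc x, Suc y)) ` cp w" using bc by force
    hence ey: "(Suc b, Suc (\<tau> b)) \<in> edges (1 # map Suc w)" unfolding e by blast
    obtain x' where ex: "(Suc a, x') \<in> edges (1 # map Suc w)" "x' < Suc a"
    proof (cases "a = last w")
      case True
      thus ?thesis using that[of 1] ab(1) unfolding e by simp
    next
      case False
      have "a \<in> set w" using ab sw by simp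
      then obtain a' where aa: "(a, a') \<in> cp w" using cp_exists_succ False by blast
      have "\<not> a < a'"
      proof
        assume "a < a'"
        hence "\<tau> a = a'" using F fw_asc[OF dw aa] by simp
        thus False using ab(3) \<open>a < a'\<close> by simp
      qed
      moreover have "a \<noteq> a'" using cp_neq[OF dw aa] .
      ultimately have "a' < a" by simp
      moreover have "(Suc a, Suc a') \<in> (\<lambda>(x,y). (Suc x, Suc y)) ` cp w" using aa by force
      ultimately show ?thesis using that[of "Suc a'"] unfolding e by blast
    qed
    have "\<not> sf (1 # map Suc w)" unfolding sf_def using ex ey ab(4,5) by fastforce
    thus False using dL(3) L2 by simp
  qed
  have "\<tau> \<in> Tset n" using order_T[OF s assms(1) ord] .
  thus ?thesis using GG gL by simp
qed

lemma card_T: "n \<ge> 1 \<Longrightarrow> card (Cstar (n+1)) = card (Tset n)"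
proof -
  assume n: "n \<ge> 1"
  have "card (Cstar (n+1)) = card (DL (n+1) 1)" by (rule card_Cstar_DL) simp
  also have "\<dots> = card (Tset n)"
  proof (rule bij_betw_same_card[symmetric])
    show "bij_betw (Gm n) (Tset n) (DL (n+1) 1)"
    proof (rule bij_betw_byWitness[where f' = gm])
      show "\<forall>\<tau>\<in>Tset n. gm (Gm n \<tau>) = \<tau>"
      proof
        fix \<tau> assume t: "\<tau> \<in> Tset n"
        hence s: "\<tau> \<in> Sym n" unfolding Tset_def by simp
        have "map (\<lambda>x. x - 1) (map Suc (Wf \<tau> {1..n} n)) = Wf \<tau> {1..n} n" by (simp add: map_idI)
        thus "gm (Gm n \<tau>) = \<tau>" unfolding gm_def Gm_def using W_facts(4)[OF s n] by simp
      qed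
      show "\<forall>L\<in>DL (n+1) 1. Gm n (gm L) = L" using g_in_T[OF n] by blast
      show "Gm n ` Tset n \<subseteq> DL (n+1) 1" using G_in_DL[OF n] by blast
      show "gm ` DL (n+1) 1 \<subseteq> Tset n" using g_in_T[OF n] by blast
    qed
  qed
  finally show ?thesis .
qed




lemma sum_T:
  assumes "n \<ge> 1"
  shows "(\<Sum>k=0..n-1. ba_count k (n - 1 - k)) = card (Tset n)"
proof -
  define Bk where "Bk k = {\<pi> \<in> Sym n. \<forall>i\<in>{1..n-1}. (i < \<pi> i \<longleftrightarrow> i \<le> k)}" for k
  have fS: "finite (Sym n)" unfolding Sym_def by (simp add: finite_permutations)
  have b: "ba_count k (n - 1 - k) = card (Bk k)" if "k \<in> {0..n-1}" for k
  proof -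
    have "k + (n - 1 - k) = n - 1" "k + (n - 1 - k) + 1 = n" using that assms by auto
    thus ?thesis unfolding ba_count_def Bk_def by simp
  qed
  have U: "Tset n = (\<Union>k\<in>{0..n-1}. Bk k)"
  proof
    show "Tset n \<subseteq> (\<Union>k\<in>{0..n-1}. Bk k)"
    proof
      fix \<pi> assume "\<pi> \<in> Tset n"
      then obtain k where "\<pi> \<in> Sym n" "k < n" "\<forall>i\<in>{1..n-1}. (i < \<pi> i \<longleftrightarrow> i \<le> k)"
        unfolding Tset_def by blast
      hence "k \<in> {0..n-1}" "\<pi> \<in> Bk k" unfolding Bk_def by auto
      thus "\<pi> \<in> (\<Union>k\<in>{0..n-1}. Bk k)" by blast
    qed
    show "(\<Union>k\<in>{0..n-1}. Bk k) \<subseteq> Tset n"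
    proof
      fix \<pi> assume "\<pi> \<in> (\<Union>k\<in>{0..n-1}. Bk k)"
      then obtain k where "k \<in> {0..n-1}" "\<pi> \<in> Bk k" by blast
      hence "\<pi> \<in> Sym n" "k < n" "\<forall>i\<in>{1..n-1}. (i < \<pi> i \<longleftrightarrow> i \<le> k)" using assms unfolding Bk_def by auto
      thus "\<pi> \<in> Tset n" unfolding Tset_def by blast
    qed
  qed
  have "card (Tset n) = (\<Sum>k\<in>{0..n-1}. card (Bk k))"
    unfolding U
  proof (rule card_UN_disjoint)
    show "finite {0..n-1}" by simp
    show "\<forall>k\<in>{0..n-1}. finite (Bk k)" using fS unfolding Bk_def by simp
    show "\<forall>k\<in>{0..n-1}. \<forall>j\<in>{0..n-1}. k \<noteq> j \<longrightarrow> Bk k \<inter> Bk j = {}"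
    proof (intro ballI impI)
      fix k j assume kj: "k \<in> {0..n-1}" "j \<in> {0..n-1}" "k \<noteq> j"
      show "Bk k \<inter> Bk j = {}"
      proof (rule ccontr)
        assume "Bk k \<inter> Bk j \<noteq> {}"
        then obtain \<pi> where p: "\<pi> \<in> Bk k" "\<pi> \<in> Bk j" by blast
        define M where "M = max k j"
        have "M \<in> {1..n-1}" using kj unfolding M_def by auto
        hence "(M < \<pi> M \<longleftrightarrow> M \<le> k)" "(M < \<pi> M \<longleftrightarrow> M \<le> j)" using p unfolding Bk_def by auto
        thus False using kj(3) unfolding M_def by (auto simp: max_def split: if_splits)
      qed
    qed
  qed
  also have "\<dots> = (\<Sum>k=0..n-1. ba_count k (n - 1 - k))" using b by simp
  finally show ?thesis by simp
qed

theorem lemma1p6: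
  fixes n :: nat
  assumes "n \<ge> 1"
  shows "card (Cstar (n+1)) = (\<Sum>k=0..n-1. ba_count k (n - 1 - k)) \<and>
         card (Cstar (n+1)) \<le> alpha n \<and>
         alpha n \<le> card (Cstar (n+1)) + card (Cstar (n+2)) \<and>
         card (Cstar (n+1)) + card (Cstar (n+2)) \<le> 2 * card (Cstar (n+2))"
  using card_T[OF assms] sum_T[OF assms] part2[OF assms] by simp


end
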